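(* Let $L>0$ be fixed. There exists $C>0$ such that for all $\delta t\in(0,1)$ and all integers $p\ge1$, $n\ge1$, $$\delta t^2\sum_{\substack{(k_1,k_2)\in\{0,\dots,n-1\}^2\\ 2n-2-k_1-k_2\ge1}}\frac{e^{-p^2\frac{\pi^2}{L^2}(k_1+k_2)\delta t}}{\sqrt{(2n-2-k_1-k_2)\delta t}}\le C.$$ *)

theory Defs
  imports "HOL-Analysis.Analysis"
begin

end

theory Submission
  imports Defs
begin

lemma geo_bound:
  fixes a a0 dt :: real
  assumes "0 < a0" "a0 \<le> a" "0 < dt" "dt < 1"
  shows "(\<Sum>k<n. exp (- (a * real k * dt))) \<le> (1 + a0) / (a0 * dt)"
proof -
  define q where "q = exp (- (a * dt))"
  have e: "exp (- (a * real k * dt)) = q ^ k" for k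
    unfolding q_def by (metis exp_of_nat_mult mult.commute mult_minus_right mult.left_commute)
  have x0: "a0 * dt \<le> a * dt" using assms by (simp add: mult_right_mono)
  have pos: "0 < a * dt" using assms by simp
  have "1 + a * dt \<le> exp (a * dt)" by (rule exp_ge_add_one_self)
  hence qle: "q \<le> 1 / (1 + a * dt)" unfolding q_def using pos
    by (simp add: exp_minus field_simps)
  have q0: "0 < q" unfolding q_def by simp
  have "a0 * dt / (1 + a0) \<le> a0 * dt / (1 + a0 * dt)"
  proof (rule divide_left_mono)
    show "1 + a0 * dt \<le> 1 + a0" using assms by simp
    show "0 \<le> a0 * dt" using assms by simp
    have "0 < 1 + a0 * dt" using assms by (smt (verit) mult_pos_pos)
    then show "0 < (1 + a0) * (1 + a0 * dt)" using assms by simp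
  qed
  also have "\<dots> = 1 - 1 / (1 + a0 * dt)"
  proof -
    have "0 < 1 + a0 * dt" using assms by (smt (verit) mult_pos_pos)
    then show ?thesis by (simp add: field_simps)
  qed
  also have "\<dots> \<le> 1 - 1 / (1 + a * dt)"
  proof -
    have "1 / (1 + a * dt) \<le> 1 / (1 + a0 * dt)"
      using x0 assms by (intro divide_left_mono mult_pos_pos) (auto simp: add_pos_nonneg)
    then show ?thesis by simp
  qed
  also have "\<dots> \<le> 1 - q" using qle by simp
  finally have lb: "a0 * dt / (1 + a0) \<le> 1 - q" .
  have lbp: "0 < a0 * dt / (1 + a0)" using assms by simp
  have q1: "q < 1" using lb lbp by linarith
  have "(\<Sum>k<n. exp (- (a * real k * dt))) = (\<Sum>k<n. q ^ k)" by (simp add: e)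
  also have "\<dots> = (1 - q ^ n) / (1 - q)" using q1 by (simp add: sum_gp_strict)
  also have "\<dots> \<le> 1 / (1 - q)" using q1 q0 by (simp add: divide_right_mono)
  also have "\<dots> \<le> 1 / (a0 * dt / (1 + a0))" using lb lbp by (intro divide_left_mono mult_pos_pos) auto
  also have "\<dots> = (1 + a0) / (a0 * dt)" by simp
  finally show ?thesis .
qed

definition gg :: "nat \<Rightarrow> real" where "gg j = (if j = 0 then 0 else 1 / sqrt (real j))"

lemma sqrt_sum_bound:
  "(\<Sum>j<Suc M. (if j = 0 then 0 else 1 / sqrt (real j))) \<le> 2 * sqrt (real M)"
proof (induction M)
  case 0
  then show ?case by simp
next
  case (Suc M)
  have h: "2 * (sqrt (real M) * sqrt (real M + 1)) \<le> 2 * real M + 1"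
  proof (rule power2_le_imp_le)
    have "(2 * (sqrt (real M) * sqrt (real M + 1)))^2 = 4 * (real M * (real M + 1))"
      by (simp add: power_mult_distrib)
    also have "\<dots> \<le> (2 * real M + 1)^2" by (simp add: power2_eq_square algebra_simps)
    finally show "(2 * (sqrt (real M) * sqrt (real M + 1)))^2 \<le> (2 * real M + 1)^2" .
  qed simp
  have s1: "0 < sqrt (real M + 1)" by simp
  have "2 * sqrt (real M) + 1 / sqrt (real M + 1) \<le> 2 * sqrt (real M + 1)"
  proof -
    have "(2 * sqrt (real M) + 1 / sqrt (real M + 1)) * sqrt (real M + 1)
          = 2 * (sqrt (real M) * sqrt (real M + 1)) + 1" using s1 by (simp add: field_simps)
    also have "\<dots> \<le> 2 * (real M + 1)" using h by (simp add: algebra_simps)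
    also have "\<dots> = 2 * sqrt (real M + 1) * sqrt (real M + 1)"
      by (simp add: mult.assoc)
    finally show ?thesis using s1 by (simp add: mult_le_cancel_right)
  qed
  then show ?case using Suc by (simp add: add.commute)
qed

lemma gg_nonneg: "0 \<le> gg j" by (simp add: gg_def)

lemma sqrt_exp_bound:
  fixes y :: real assumes "0 \<le> y" shows "sqrt y * exp (- y) \<le> 1"
proof -
  have "y \<le> exp (2 * y)" using exp_ge_add_one_self[of "2*y"] assms by linarith
  also have "\<dots> = (exp y)^2" by (simp add: power2_eq_square exp_add[symmetric])
  finally have "sqrt y \<le> exp y" by (simp add: real_le_lsqrt real_sqrt_le_iff)
  then show ?thesis by (simp add: exp_minus field_simps)
qed

lemma conv_bound:
  fixes a a0 dt :: real
  assumes "0 < a0" "a0 \<le> a" "0 < dt" "dt < 1"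
  shows "(\<Sum>k<Suc M. exp (- (a * real k * dt)) * gg (M - k))
         \<le> (2 * sqrt ((1 + a0) / a0) + 2 * sqrt (2 / a0)) / sqrt dt"
proof -
  define G where "G = (1 + a0) / (a0 * dt)"
  define S where "S = (\<Sum>k<Suc M. exp (- (a * real k * dt)))"
  define E where "E = exp (- (a * real M * dt / 2))"
  have apos: "0 < a" using assms by linarith
  have pw: "exp (- (a * real k * dt)) * gg (M - k)
         \<le> sqrt 2 / sqrt (real M) * exp (- (a * real k * dt)) + E * gg (M - k)"
    if "k < Suc M" for k
  proof (cases "M - k = 0")
    case True
    then show ?thesis by (simp add: gg_def E_def)
  next
    case False
    hence kM: "k < M" by simp
    have g: "gg (M - k) = 1 / sqrt (real (M - k))" using False by (simp add: gg_def)
    show ?thesis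
    proof (cases "2 * k \<le> M")
      case True
      have "real M \<le> 2 * real (M - k)" using True kM by simp
      hence "sqrt (real M) \<le> sqrt 2 * sqrt (real (M - k))"
        by (metis real_sqrt_le_mono real_sqrt_mult)
      hence "1 / sqrt (real (M - k)) \<le> sqrt 2 / sqrt (real M)"
        using kM False by (simp add: field_simps)
      hence "exp (- (a * real k * dt)) * gg (M - k) \<le> exp (- (a * real k * dt)) * (sqrt 2 / sqrt (real M))"
        unfolding g by (intro mult_left_mono) auto
      hence "exp (- (a * real k * dt)) * gg (M - k) \<le> sqrt 2 / sqrt (real M) * exp (- (a * real k * dt))"
        by (metis mult.commute)
      moreover have "0 \<le> E * gg (M - k)" by (simp add: E_def gg_nonneg)
      ultimately show ?thesis by linarith
    next
      case False
      have "a * real M * dt / 2 \<le> a * real k * dt"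
      proof -
        have "real M \<le> 2 * real k" using False by simp
        hence "a * dt * real M \<le> a * dt * (2 * real k)" using apos assms by (intro mult_left_mono) auto
        then show ?thesis by (simp add: algebra_simps)
      qed
      hence "exp (- (a * real k * dt)) \<le> E" unfolding E_def by simp
      hence "exp (- (a * real k * dt)) * gg (M - k) \<le> E * gg (M - k)"
        by (intro mult_right_mono gg_nonneg)
      moreover have "0 \<le> sqrt 2 / sqrt (real M) * exp (- (a * real k * dt))" by simp
      ultimately show ?thesis by linarith
    qed
  qed
  have "(\<Sum>k<Suc M. exp (- (a * real k * dt)) * gg (M - k))
     \<le> (\<Sum>k<Suc M. sqrt 2 / sqrt (real M) * exp (- (a * real k * dt)) + E * gg (M - k))"
    by (intro sum_mono pw) simp
  also have "\<dots> = sqrt 2 / sqrt (real M) * S + E * (\<Sum>k<Suc M. gg (M - k))"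
    by (simp only: sum.distrib sum_distrib_left S_def)
  also have "(\<Sum>k<Suc M. gg (M - k)) = (\<Sum>j<Suc M. gg j)"
    using sum.nat_diff_reindex[of gg "Suc M"] by simp
  also have "\<dots> \<le> 2 * sqrt (real M)" using sqrt_sum_bound[of M] by (simp add: gg_def)
  finally have main: "(\<Sum>k<Suc M. exp (- (a * real k * dt)) * gg (M - k))
     \<le> sqrt 2 / sqrt (real M) * S + E * (2 * sqrt (real M))"
    by (simp add: E_def mult_left_mono)
  have SG: "S \<le> G" unfolding S_def G_def by (rule geo_bound[OF assms])
  have S0: "0 \<le> S" unfolding S_def by (simp add: sum_nonneg)
  have G0: "0 < G" unfolding G_def using assms by simp
  have t1: "sqrt 2 / sqrt (real M) * S \<le> 2 * sqrt ((1 + a0) / a0) / sqrt dt"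
  proof (cases "M = 0")
    case True
    then show ?thesis using assms by simp
  next
    case False
    have "S \<le> (\<Sum>k<Suc M. 1)" unfolding S_def using apos assms by (intro sum_mono) simp
    hence SM: "S \<le> 2 * real M" using False by simp
    have "S * S \<le> (2 * real M) * G" using SM SG S0 G0 by (intro mult_mono) auto
    hence "sqrt (S * S) \<le> sqrt (2 * real M * G)" by (rule real_sqrt_le_mono)
    hence "S \<le> sqrt 2 * sqrt (real M) * sqrt G" using S0 by (simp add: real_sqrt_mult)
    hence "sqrt 2 / sqrt (real M) * S \<le> sqrt 2 / sqrt (real M) * (sqrt 2 * sqrt (real M) * sqrt G)"
      by (intro mult_left_mono) auto
    also have "\<dots> = 2 * sqrt G" using False by simp
    also have "sqrt G = sqrt ((1 + a0) / a0) / sqrt dt" unfolding G_def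
      by (simp add: real_sqrt_divide real_sqrt_mult)
    finally show ?thesis by simp
  qed
  define c where "c = a0 / 2"
  have c0: "0 < c" using assms by (simp add: c_def)
  define y where "y = c * real M * dt"
  have y0: "0 \<le> y" using c0 assms by (simp add: y_def)
  have "E \<le> exp (- y)" unfolding E_def y_def c_def
  proof (subst exp_le_cancel_iff)
    have "a0 * (real M * dt) \<le> a * (real M * dt)" using assms by (intro mult_right_mono) auto
    then show "- (a * real M * dt / 2) \<le> - (a0 / 2 * real M * dt)" by (simp add: algebra_simps)
  qed
  have sM: "sqrt (real M) = sqrt y / sqrt (c * dt)" unfolding y_def using c0 assms
    by (simp add: real_sqrt_mult)
  have "E * (2 * sqrt (real M)) \<le> exp (- y) * (2 * sqrt (real M))" using \<open>E \<le> exp (- y)\<close>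
    by (intro mult_right_mono) auto
  also have "exp (- y) * (2 * sqrt (real M)) = 2 * (sqrt y * exp (- y)) / sqrt (c * dt)"
    unfolding sM by simp
  also have "\<dots> \<le> 2 * 1 / sqrt (c * dt)" using sqrt_exp_bound[OF y0] c0 assms
    by (intro divide_right_mono mult_left_mono) auto
  also have "\<dots> = 2 * sqrt (2 / a0) / sqrt dt" unfolding c_def using assms
    by (simp add: real_sqrt_mult real_sqrt_divide field_simps)
  finally have t2: "E * (2 * sqrt (real M)) \<le> 2 * sqrt (2 / a0) / sqrt dt" .
  show ?thesis using main t1 t2 by (simp add: add_divide_distrib)
qed

lemma inv_sqrt_le_gg:
  assumes "k1 \<le> M" "k2 \<le> M" "1 \<le> real (M - k1) + real (M - k2)"
  shows "1 / sqrt (real (M - k1) + real (M - k2)) \<le> gg (M - k1) + gg (M - k2)"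
proof (cases "M - k1 = 0")
  case True
  then have "M - k2 \<noteq> 0" using assms by auto
  then show ?thesis using True by (simp add: gg_def)
next
  case False
  have "sqrt (real (M - k1)) \<le> sqrt (real (M - k1) + real (M - k2))" by simp
  hence "1 / sqrt (real (M - k1) + real (M - k2)) \<le> 1 / sqrt (real (M - k1))"
    using False by (intro divide_left_mono) auto
  also have "\<dots> = gg (M - k1)" using False by (simp add: gg_def)
  finally show ?thesis using gg_nonneg[of "M - k2"] by linarith
qed

lemma pt_bound:
  fixes a dt :: real
  assumes "0 < dt" "k1 \<le> M" "k2 \<le> M" "1 \<le> 2 * int (Suc M) - 2 - int k1 - int k2"
  shows "exp (- (a * real (k1 + k2) * dt)) / sqrt (real_of_int (2 * int (Suc M) - 2 - int k1 - int k2) * dt)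
     \<le> (exp (- (a * real k1 * dt)) * exp (- (a * real k2 * dt)) * gg (M - k1)
        + exp (- (a * real k1 * dt)) * exp (- (a * real k2 * dt)) * gg (M - k2)) / sqrt dt"
proof -
  define m where "m = real (M - k1) + real (M - k2)"
  have meq: "real_of_int (2 * int (Suc M) - 2 - int k1 - int k2) = m"
    unfolding m_def using assms by (simp add: of_nat_diff)
  have m1: "1 \<le> m" using assms(4) meq
    by (metis of_int_1 of_int_le_iff)
  define P where "P = exp (- (a * real k1 * dt)) * exp (- (a * real k2 * dt))"
  have P0: "0 \<le> P" by (simp add: P_def)
  have e: "exp (- (a * real (k1 + k2) * dt)) = P"
    unfolding P_def by (simp add: exp_add[symmetric] algebra_simps)
  have "exp (- (a * real (k1 + k2) * dt)) / sqrt (real_of_int (2 * int (Suc M) - 2 - int k1 - int k2) * dt)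
      = P * (1 / sqrt m) / sqrt dt" unfolding e meq by (simp add: real_sqrt_mult)
  also have "\<dots> \<le> P * (gg (M - k1) + gg (M - k2)) / sqrt dt"
    using inv_sqrt_le_gg[of k1 M k2] assms m1 P0 unfolding m_def
    by (intro divide_right_mono mult_left_mono) auto
  also have "\<dots> = (P * gg (M - k1) + P * gg (M - k2)) / sqrt dt" by (simp add: algebra_simps)
  finally show ?thesis unfolding P_def .
qed

theorem lemma6p4:
  fixes L :: real
  assumes "L > 0"
  shows "\<exists>C>0. \<forall>dt::real. \<forall>p::nat. \<forall>n::nat.
           0 < dt \<longrightarrow> dt < 1 \<longrightarrow> 1 \<le> p \<longrightarrow> 1 \<le> n \<longrightarrow>
           dt ^ 2 * (\<Sum>(k1, k2) \<in> {(k1, k2). k1 < n \<and> k2 < n \<and>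
                         1 \<le> 2 * int n - 2 - int k1 - int k2}.
              exp (- ((real p) ^ 2 * pi ^ 2 / L ^ 2 * real (k1 + k2) * dt))
              / sqrt (real_of_int (2 * int n - 2 - int k1 - int k2) * dt)) \<le> C"
proof -
  define a0 where "a0 = pi ^ 2 / L ^ 2"
  have a0pos: "0 < a0" unfolding a0_def using assms by simp
  define K where "K = 2 * sqrt ((1 + a0) / a0) + 2 * sqrt (2 / a0)"
  have K0: "0 < K" unfolding K_def using a0pos by (simp add: add_pos_pos)
  define C where "C = 2 * ((1 + a0) / a0) * K"
  have C0: "0 < C" unfolding C_def using a0pos K0 by simp
  show ?thesis
  proof (intro exI[of _ C] conjI allI impI)
    show "0 < C" by (rule C0)
    fix dt :: real and p n :: nat
    assume dt0: "0 < dt" and dt1: "dt < 1" and p1: "1 \<le> p" and n1: "1 \<le> n"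
    obtain M where nM: "n = Suc M" using n1 by (cases n) auto
    define a where "a = real p ^ 2 * pi ^ 2 / L ^ 2"
    have "1 \<le> real p ^ 2" using p1 by simp
    moreover have "a = real p ^ 2 * a0" unfolding a_def a0_def by simp
    ultimately have aa0: "a0 \<le> a" using a0pos
      by (metis mult_le_cancel_right1 less_imp_le not_le)
    define f where "f k = exp (- (a * real k * dt))" for k
    define S where "S = {(k1, k2). k1 < n \<and> k2 < n \<and> 1 \<le> 2 * int n - 2 - int (k1::nat) - int (k2::nat)}"
    define h where "h = (\<lambda>(k1, k2). (f k1 * f k2 * gg (M - k1) + f k1 * f k2 * gg (M - k2)) / sqrt dt)"
    define A where "A = (\<Sum>k<n. f k)"
    define B where "B = (\<Sum>k<n. f k * gg (M - k))"
    have "(\<Sum>(k1, k2) \<in> S. exp (- (a * real (k1 + k2) * dt))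
              / sqrt (real_of_int (2 * int n - 2 - int k1 - int k2) * dt)) \<le> (\<Sum>x \<in> S. h x)"
    proof (rule sum_mono)
      fix x assume "x \<in> S"
      then obtain k1 k2 where x: "x = (k1, k2)" "k1 \<le> M" "k2 \<le> M"
        "1 \<le> 2 * int (Suc M) - 2 - int k1 - int k2" unfolding S_def nM by auto
      show "(case x of (k1, k2) \<Rightarrow> exp (- (a * real (k1 + k2) * dt))
              / sqrt (real_of_int (2 * int n - 2 - int k1 - int k2) * dt)) \<le> h x"
        unfolding x h_def f_def nM using pt_bound[OF dt0 x(2,3,4), of a] by simp
    qed
    also have "\<dots> \<le> (\<Sum>x \<in> {..<n} \<times> {..<n}. h x)"
    proof (rule sum_mono2)
      show "S \<subseteq> {..<n} \<times> {..<n}" unfolding S_def by auto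
      show "0 \<le> h x" for x unfolding h_def f_def using dt0
        by (auto simp: gg_nonneg split: prod.splits intro!: divide_nonneg_nonneg add_nonneg_nonneg mult_nonneg_nonneg)
    qed simp
    also have "\<dots> = (\<Sum>k1<n. \<Sum>k2<n. h (k1, k2))" by (simp add: sum.cartesian_product)
    also have "\<dots> = (\<Sum>k1<n. \<Sum>k2<n. ((f k1 * gg (M - k1)) * f k2
                    + f k1 * (f k2 * gg (M - k2))) / sqrt dt)"
      unfolding h_def by (intro sum.cong refl) (simp add: mult_ac)
    also have "\<dots> = ((\<Sum>k1<n. \<Sum>k2<n. (f k1 * gg (M - k1)) * f k2)
                    + (\<Sum>k1<n. \<Sum>k2<n. f k1 * (f k2 * gg (M - k2)))) / sqrt dt"
      by (simp only: add_divide_distrib sum_divide_distrib sum.distrib)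
    also have "\<dots> = (B * A + A * B) / sqrt dt"
      unfolding A_def B_def by (simp only: sum_product)
    finally have s1: "(\<Sum>(k1, k2) \<in> S. exp (- (a * real (k1 + k2) * dt))
              / sqrt (real_of_int (2 * int n - 2 - int k1 - int k2) * dt)) \<le> 2 * A * B / sqrt dt"
      by simp
    have AG: "A \<le> (1 + a0) / (a0 * dt)" unfolding A_def f_def by (rule geo_bound[OF a0pos aa0 dt0 dt1])
    have BK: "B \<le> K / sqrt dt" unfolding B_def f_def K_def nM by (rule conv_bound[OF a0pos aa0 dt0 dt1])
    have A0: "0 \<le> A" unfolding A_def f_def by (simp add: sum_nonneg)
    have B0: "0 \<le> B" unfolding B_def f_def by (simp add: sum_nonneg gg_nonneg)
    have "dt ^ 2 * (2 * A * B / sqrt dt) \<le> dt ^ 2 * (2 * ((1 + a0) / (a0 * dt)) * (K / sqrt dt) / sqrt dt)"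
      using AG BK A0 B0 dt0 a0pos by (intro mult_left_mono divide_right_mono mult_mono) auto
    also have "\<dots> = C" unfolding C_def using dt0 a0pos
      by (simp add: field_simps power2_eq_square)
    finally have fin: "dt ^ 2 * (2 * A * B / sqrt dt) \<le> C" .
    have "dt ^ 2 * (\<Sum>(k1, k2) \<in> S. exp (- (a * real (k1 + k2) * dt))
              / sqrt (real_of_int (2 * int n - 2 - int k1 - int k2) * dt)) \<le> C"
      using mult_left_mono[OF s1, of "dt^2"] fin by simp
    then show "dt ^ 2 * (\<Sum>(k1, k2) \<in> {(k1, k2). k1 < n \<and> k2 < n \<and>
                         1 \<le> 2 * int n - 2 - int k1 - int k2}.
              exp (- ((real p) ^ 2 * pi ^ 2 / L ^ 2 * real (k1 + k2) * dt))
              / sqrt (real_of_int (2 * int n - 2 - int k1 - int k2) * dt)) \<le> C"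
      unfolding S_def a_def .
  qed
qed

end
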